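(* Let $V\neq\emptyset$, let $F\colon V\leadsto V$ be an undirected multifunction and let $m,k\in\mathbb{N}$. Then: (i) $F^{\infty\cup}_{\mid m}(w)=\{u\in V\mid \mathrm{Walk}_{u\to w}(F,V\mid m)\neq\emptyset\}$ for every $w\in V$, and $F^{\infty\cup}_{\mid m}$ is undirected, everywhereloop and transitive; (ii) $F^{\infty\cup}_{\mid -m}=F^{\infty-}_{\mid m}=F^{\infty\cup}_{\mid m}$; (iii) $(F^{m\cup})^{\infty\cup}_{\mid k}=F^{\infty\cup}_{\mid k\cdot m}$; (iv) if $k\mid m$ then $F^{\infty\cup}_{\mid m}\subset F^{\infty\cup}_{\mid k}$ and $F^{m\cup}\subset F^{\infty\cup}_{\mid k}$; (v) $F^{m\cup}\subset F^{\infty\cup}_{\mid m}\subset F^{\infty\cup}_{\mid 1}$.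
   Context: Here $\mathbb{N}=\{0,1,2,\dots\}$, $-\mathbb{N}=\{-n\mid n\in\mathbb{N}\}$. A multifunction $F\colon V\leadsto V$ is a map $V\to P(V)$, with inverse $F^{-1}(v)=\{x\mid v\in F(x)\}$; it is undirected if $F=F^{-1}$, everywhereloop if $v\in F(v)$ for all $v$, transitive if $u\in F(v)$ and $v\in F(w)$ imply $u\in F(w)$. Inclusion and union of multifunctions are pointwise. For $A\subset V$: $F_{\cup}(A)=\bigcup_{a\in A}F(a)$, $F_{-}(A)=\{x\mid F(x)\cap A\neq\emptyset\}$. For $n\in\mathbb{Z}$: $F^{0\cup}(v)=\{v\}$, $F^{n\cup}(v)=F_{\cup}(F^{(n-1)\cup}(v))$ for $n>0$, $F^{n\cup}=(F^{-1})^{(-n)\cup}$ for $n<0$; similarly $F^{0-}(v)=\{v\}$, $F^{n-}(v)=F_{-}(F^{(n-1)-}(v))$ for $n>0$, $F^{n-}=(F^{-1})^{(-n)-}$ for $n<0$. For $m\in\mathbb{Z}$: $F^{+\infty\cup}_{\mid m}=\bigcup_{n\in\mathbb{N}}F^{(mn)\cup}$, $F^{-\infty\cup}_{\mid m}=\bigcup_{n\in-\mathbb{N}}F^{(mn)\cup}$, $F^{\infty\cup}_{\mid m}=F^{+\infty\cup}_{\mid m}\cup F^{-\infty\cup}_{\mid m}$, and analogously $F^{\infty-}_{\mid m}=\bigcup_{n\in\mathbb{N}}F^{(mn)-}\cup\bigcup_{n\in-\mathbb{N}}F^{(mn)-}$. $\mathrm{Walk}_{u\to w}(F,V,n)$ is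 the set of words $\alpha_1\cdots\alpha_{n+1}$ over $V$ with $\alpha_1=u$, $\alpha_{n+1}=w$, $\alpha_i\in F(\alpha_{i+1})$ for $1\le i\le n$; and $\mathrm{Walk}_{u\to w}(F,V\mid m)=\bigcup_{n\in\mathbb{N}}\mathrm{Walk}_{u\to w}(F,V,m\cdot n)$. *)

theory Defs
  imports Main
begin

(* The vertex set V is represented by the (nonempty) type 'a; a multifunction
   F : V \<leadsto> V is a function 'a \<Rightarrow> 'a set. Inclusion of multifunctions is the
   pointwise order \<le> on functions. *)

definition mf_inv :: "('a \<Rightarrow> 'a set) \<Rightarrow> 'a \<Rightarrow> 'a set" where
  "mf_inv F v = {x. v \<in> F x}"

definition undirected :: "('a \<Rightarrow> 'a set) \<Rightarrow> bool" where
  "undirected F \<longleftrightarrow> F = mf_inv F"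

definition everywhereloop :: "('a \<Rightarrow> 'a set) \<Rightarrow> bool" where
  "everywhereloop F \<longleftrightarrow> (\<forall>v. v \<in> F v)"

definition mf_transitive :: "('a \<Rightarrow> 'a set) \<Rightarrow> bool" where
  "mf_transitive F \<longleftrightarrow> (\<forall>u v w. u \<in> F v \<and> v \<in> F w \<longrightarrow> u \<in> F w)"

definition F_cup :: "('a \<Rightarrow> 'a set) \<Rightarrow> 'a set \<Rightarrow> 'a set" where
  "F_cup F A = (\<Union>a\<in>A. F a)"

definition F_minus :: "('a \<Rightarrow> 'a set) \<Rightarrow> 'a set \<Rightarrow> 'a set" where
  "F_minus F A = {x. F x \<inter> A \<noteq> {}}"

primrec pow_cup_nat :: "('a \<Rightarrow> 'a set) \<Rightarrow> nat \<Rightarrow> 'a \<Rightarrow> 'a set" where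
  "pow_cup_nat F 0 v = {v}"
| "pow_cup_nat F (Suc n) v = F_cup F (pow_cup_nat F n v)"

primrec pow_minus_nat :: "('a \<Rightarrow> 'a set) \<Rightarrow> nat \<Rightarrow> 'a \<Rightarrow> 'a set" where
  "pow_minus_nat F 0 v = {v}"
| "pow_minus_nat F (Suc n) v = F_minus F (pow_minus_nat F n v)"

definition pow_cup :: "('a \<Rightarrow> 'a set) \<Rightarrow> int \<Rightarrow> 'a \<Rightarrow> 'a set" where
  "pow_cup F n = (if 0 \<le> n then pow_cup_nat F (nat n) else pow_cup_nat (mf_inv F) (nat (- n)))"

definition pow_minus :: "('a \<Rightarrow> 'a set) \<Rightarrow> int \<Rightarrow> 'a \<Rightarrow> 'a set" where
  "pow_minus F n = (if 0 \<le> n then pow_minus_nat F (nat n) else pow_minus_nat (mf_inv F) (nat (- n)))"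

definition inf_cup_pos :: "('a \<Rightarrow> 'a set) \<Rightarrow> int \<Rightarrow> 'a \<Rightarrow> 'a set" where
  "inf_cup_pos F m v = (\<Union>n::nat. pow_cup F (m * int n) v)"

definition inf_cup_neg :: "('a \<Rightarrow> 'a set) \<Rightarrow> int \<Rightarrow> 'a \<Rightarrow> 'a set" where
  "inf_cup_neg F m v = (\<Union>n::nat. pow_cup F (m * (- int n)) v)"

definition inf_cup :: "('a \<Rightarrow> 'a set) \<Rightarrow> int \<Rightarrow> 'a \<Rightarrow> 'a set" where
  "inf_cup F m v = inf_cup_pos F m v \<union> inf_cup_neg F m v"

definition inf_minus :: "('a \<Rightarrow> 'a set) \<Rightarrow> int \<Rightarrow> 'a \<Rightarrow> 'a set" where
  "inf_minus F m v = (\<Union>n::nat. pow_minus F (m * int n) v) \<union> (\<Union>n::nat. pow_minus F (m * (- int n)) v)"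

(* Walk_{u\<rightarrow>w}(F,V,n): words \<alpha>_1\<dots>\<alpha>_{n+1} (lists of length n+1, 0-indexed here)
   with \<alpha>_1 = u, \<alpha>_{n+1} = w, \<alpha>_i \<in> F(\<alpha>_{i+1}) *)
definition Walk :: "('a \<Rightarrow> 'a set) \<Rightarrow> 'a \<Rightarrow> 'a \<Rightarrow> nat \<Rightarrow> 'a list set" where
  "Walk F u w n = {xs. length xs = n + 1 \<and> xs ! 0 = u \<and> xs ! n = w \<and>
                       (\<forall>i<n. xs ! i \<in> F (xs ! (i + 1)))}"

definition Walk_mult :: "('a \<Rightarrow> 'a set) \<Rightarrow> 'a \<Rightarrow> 'a \<Rightarrow> nat \<Rightarrow> 'a list set" where
  "Walk_mult F u w m = (\<Union>n::nat. Walk F u w (m * n))"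

end

theory Submission
  imports Defs
begin

lemma und_inv: "undirected F \<Longrightarrow> mf_inv F = F"
  unfolding undirected_def by simp

lemma und_sym: "undirected F \<Longrightarrow> u \<in> F v \<longleftrightarrow> v \<in> F u"
  unfolding undirected_def mf_inv_def by (metis mem_Collect_eq)

lemma pow_add: "pow_cup_nat F (a+b) w = (\<Union>x\<in>pow_cup_nat F b w. pow_cup_nat F a x)"
  by (induction a) (auto simp: F_cup_def)

lemma pow_mult: "pow_cup_nat (pow_cup_nat F m) j = pow_cup_nat F (m*j)"
proof (rule ext, induction j)
  case 0 then show ?case by simp
next
  case (Suc j)
  show ?case using Suc pow_add[of F m "m*j"] by (simp add: F_cup_def)
qed

lemma pow_sym: "undirected F \<Longrightarrow> u \<in> pow_cup_nat F n v \<longleftrightarrow> v \<in> pow_cup_nat F n u"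
proof (induction n arbitrary: u v)
  case 0 then show ?case by auto
next
  case (Suc n)
  have "u \<in> pow_cup_nat F (Suc n) v \<longleftrightarrow> (\<exists>x. x \<in> pow_cup_nat F n v \<and> u \<in> F x)"
    by (auto simp: F_cup_def)
  also have "\<dots> \<longleftrightarrow> (\<exists>x. v \<in> pow_cup_nat F n x \<and> x \<in> F u)"
    using Suc und_sym by metis
  also have "\<dots> \<longleftrightarrow> v \<in> pow_cup_nat F (n+1) u"
    using pow_add[of F n 1 u] by (auto simp: F_cup_def)
  finally show ?case by simp
qed

lemma pow_und: assumes "undirected F" shows "undirected (pow_cup_nat F m)"
  unfolding undirected_def mf_inv_def using pow_sym[OF assms] by blast

lemma pow_cup_und: "undirected F \<Longrightarrow> pow_cup F i = pow_cup_nat F (nat \<bar>i\<bar>)"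
  unfolding pow_cup_def using und_inv[of F] by auto

lemma minus_eq: "undirected F \<Longrightarrow> F_minus F A = F_cup F A"
  unfolding F_minus_def F_cup_def using und_sym by fastforce

lemma pow_minus_nat_eq: "undirected F \<Longrightarrow> pow_minus_nat F n = pow_cup_nat F n"
proof (rule ext)
  fix v assume u: "undirected F"
  show "pow_minus_nat F n v = pow_cup_nat F n v"
    by (induction n) (auto simp: minus_eq[OF u])
qed

lemma pow_minus_und: "undirected F \<Longrightarrow> pow_minus F i = pow_cup_nat F (nat \<bar>i\<bar>)"
  unfolding pow_minus_def using und_inv pow_minus_nat_eq by auto

lemma inf_cup_und: "undirected F \<Longrightarrow> inf_cup F (int m) v = (\<Union>n. pow_cup_nat F (m*n) v)"
  unfolding inf_cup_def inf_cup_pos_def inf_cup_neg_def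
  by (simp add: pow_cup_und abs_mult nat_mult_distrib)

lemma inf_cup_und2: "undirected F \<Longrightarrow> inf_cup F (- int m) v = (\<Union>n. pow_cup_nat F (m*n) v)"
  unfolding inf_cup_def inf_cup_pos_def inf_cup_neg_def
  by (simp add: pow_cup_und abs_mult nat_mult_distrib)

lemma inf_minus_und: "undirected F \<Longrightarrow> inf_minus F (int m) v = (\<Union>n. pow_cup_nat F (m*n) v)"
  unfolding inf_minus_def
  by (simp add: pow_minus_und abs_mult nat_mult_distrib)

lemma walk_pow: "u \<in> pow_cup_nat F n w \<longleftrightarrow> Walk F u w n \<noteq> {}"
proof (induction n arbitrary: u)
  case 0
  show ?case
  proof
    assume "u \<in> pow_cup_nat F 0 w" then have "[u] \<in> Walk F u w 0" by (auto simp: Walk_def)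
    then show "Walk F u w 0 \<noteq> {}" by blast
  next
    assume "Walk F u w 0 \<noteq> {}" then show "u \<in> pow_cup_nat F 0 w" by (auto simp: Walk_def)
  qed
next
  case (Suc n)
  show ?case
  proof
    assume "u \<in> pow_cup_nat F (Suc n) w"
    then obtain x where x: "x \<in> pow_cup_nat F n w" "u \<in> F x" by (auto simp: F_cup_def)
    then obtain ys where ys: "ys \<in> Walk F x w n" using Suc by blast
    have "u # ys \<in> Walk F u w (Suc n)"
      using ys x(2) unfolding Walk_def
      by (auto simp: nth_Cons' less_Suc_eq_0_disj)
    then show "Walk F u w (Suc n) \<noteq> {}" by blast
  next
    assume "Walk F u w (Suc n) \<noteq> {}"
    then obtain xs where xs: "xs \<in> Walk F u w (Suc n)" by blast
    have "tl xs \<in> Walk F (xs ! 1) w n"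
      using xs unfolding Walk_def by (auto simp: nth_tl)
    then have "xs ! 1 \<in> pow_cup_nat F n w" using Suc by blast
    moreover have "u \<in> F (xs ! 1)" using xs unfolding Walk_def by force
    ultimately show "u \<in> pow_cup_nat F (Suc n) w" by (auto simp: F_cup_def)
  qed
qed

theorem lemma4p11:
  fixes F :: "'a \<Rightarrow> 'a set" and m k :: nat
  assumes "undirected F"
  shows "((\<forall>w. inf_cup F (int m) w = {u. Walk_mult F u w m \<noteq> {}})
       \<and> undirected (inf_cup F (int m)) \<and> everywhereloop (inf_cup F (int m))
       \<and> mf_transitive (inf_cup F (int m)))
       \<and> (inf_cup F (- int m) = inf_minus F (int m) \<and> inf_minus F (int m) = inf_cup F (int m))
       \<and> inf_cup (pow_cup F (int m)) (int k) = inf_cup F (int k * int m)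
       \<and> (k dvd m \<longrightarrow> inf_cup F (int m) \<le> inf_cup F (int k) \<and> pow_cup F (int m) \<le> inf_cup F (int k))
       \<and> (pow_cup F (int m) \<le> inf_cup F (int m) \<and> inf_cup F (int m) \<le> inf_cup F 1)"
proof -
  note I = inf_cup_und[OF assms]
  have p1: "\<forall>w. inf_cup F (int m) w = {u. Walk_mult F u w m \<noteq> {}}"
    unfolding I Walk_mult_def using walk_pow by fastforce
  have p2: "undirected (inf_cup F (int m))"
    unfolding undirected_def mf_inv_def
    by (rule ext) (auto simp: I pow_sym[OF assms])
  have p3: "everywhereloop (inf_cup F (int m))"
    unfolding everywhereloop_def I by (intro allI UN_I[of 0]) simp_all
  have p4: "mf_transitive (inf_cup F (int m))"
    unfolding mf_transitive_def I
  proof (intro allI impI)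
    fix u v w assume "u \<in> (\<Union>n. pow_cup_nat F (m * n) v) \<and> v \<in> (\<Union>n. pow_cup_nat F (m * n) w)"
    then obtain a b where "u \<in> pow_cup_nat F (m*a) v" "v \<in> pow_cup_nat F (m*b) w" by blast
    then have "u \<in> pow_cup_nat F (m*a + m*b) w" using pow_add by fast
    then have "u \<in> pow_cup_nat F (m*(a+b)) w" by (simp add: add_mult_distrib2)
    then show "u \<in> (\<Union>n. pow_cup_nat F (m * n) w)" by blast
  qed
  have p5: "inf_cup F (- int m) = inf_minus F (int m) \<and> inf_minus F (int m) = inf_cup F (int m)"
    using inf_cup_und2[OF assms] inf_minus_und[OF assms] I by auto
  have p6: "inf_cup (pow_cup F (int m)) (int k) = inf_cup F (int k * int m)"
  proof (rule ext)
    fix v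
    have G: "pow_cup F (int m) = pow_cup_nat F m" using pow_cup_und[OF assms] by simp
    have "inf_cup F (int k * int m) v = inf_cup F (int (m*k)) v" by (simp add: mult.commute)
    also have "\<dots> = (\<Union>n. pow_cup_nat F (m*k*n) v)" using I inf_cup_und[OF assms] by blast
    finally show "inf_cup (pow_cup F (int m)) (int k) v = inf_cup F (int k * int m) v"
      unfolding G inf_cup_und[OF pow_und[OF assms]] pow_mult by (simp add: mult.assoc)
  qed
  have p7: "k dvd m \<longrightarrow> inf_cup F (int m) \<le> inf_cup F (int k) \<and> pow_cup F (int m) \<le> inf_cup F (int k)"
  proof
    assume "k dvd m" then obtain c where c: "m = k*c" by blast
    have a: "inf_cup F (int m) \<le> inf_cup F (int k)"
    proof (rule le_funI)
      fix v show "inf_cup F (int m) v \<le> inf_cup F (int k) v"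
        unfolding I inf_cup_und[OF assms, of k] c
      proof (rule UN_least)
        fix n show "pow_cup_nat F (k*c*n) v \<subseteq> (\<Union>n. pow_cup_nat F (k*n) v)"
          using UN_upper[of "c*n" UNIV "\<lambda>n. pow_cup_nat F (k*n) v"] by (simp add: mult.assoc)
      qed
    qed
    have b: "pow_cup F (int m) \<le> inf_cup F (int k)"
    proof (rule le_funI)
      fix v show "pow_cup F (int m) v \<le> inf_cup F (int k) v"
        unfolding inf_cup_und[OF assms, of k] pow_cup_und[OF assms] c
        using UN_upper[of "c" UNIV "\<lambda>n. pow_cup_nat F (k*n) v"] by (simp add: nat_mult_distrib)
    qed
    show "inf_cup F (int m) \<le> inf_cup F (int k) \<and> pow_cup F (int m) \<le> inf_cup F (int k)"
      using a b by blast
  qed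
  have p8: "pow_cup F (int m) \<le> inf_cup F (int m) \<and> inf_cup F (int m) \<le> inf_cup F 1"
  proof
    show "pow_cup F (int m) \<le> inf_cup F (int m)"
      using UN_upper[of 1 UNIV "\<lambda>n. pow_cup_nat F (m*n) v" for v]
      by (intro le_funI) (simp add: I pow_cup_und[OF assms])
    show "inf_cup F (int m) \<le> inf_cup F 1"
    proof (rule le_funI)
      fix v show "inf_cup F (int m) v \<le> inf_cup F 1 v"
      proof -
        have e: "inf_cup F 1 v = (\<Union>n. pow_cup_nat F n v)"
          using inf_cup_und[OF assms, of 1 v] by simp
        show ?thesis unfolding I e by blast
      qed
    qed
  qed
  show ?thesis using p1 p2 p3 p4 p5 p6 p7 p8 by blast
qed

end
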